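(* For every finite bounded commutative BCK-algebra $\mathcal A$, either every $x\in\mathcal A$ satisfies $x\vee\neg x=1$, or $\operatorname{emd}(\mathcal A)\le \frac23$. That is, the equation $x\vee\neg x=1$ has finite satisfiability gap $\frac13$ among bounded commutative BCK-algebras. Moreover the value $\frac23$ is attained: $\operatorname{emd}(\mathcal C_3)=\frac23$ (and in general $\operatorname{emd}(\mathcal C_n)=\frac2n$ for $n\ge2$).
   Context: A BCK-algebra is a set $A$ with a binary operation $\cdot$ and a constant $0$ such that for all $x,y,z\in A$: (BCK1) $((x\cdot y)\cdot(x\cdot z))\cdot(z\cdot y)=0$; (BCK2) $(x\cdot(x\cdot y))\cdot y=0$; (BCK3) $x\cdot x=0$; (BCK4) $0\cdot x=0$; (BCK5) $x\cdot y=0$ and $y\cdot x=0$ imply $x=y$. Define $x\wedge y:=y\cdot(y\cdot x)$; the algebra is commutative if $x\wedge y=y\wedge x$ for all $x,y$. A bounded BCK-algebra is a BCK-algebra with a distinguished element $1$ such that $x\cdot 1=0$ for all $x$; then $\neg x:=1\cdot x$ and $x\vee y:=\neg(\neg x\wedge\neg y)$. For a finite bounded commutative BCK-algebra $\mathcal A$, $\operatorname{emd}(\mathcal A)=|\{x\in\mathcal A: x\vee\neg x=1\}|/|\mathcal A|$. For $n\ge 2$, $\mathcal C_n$ is the BCK-algebra with carrier $\{0,1,\dots,n-1\}$ and $x\cdot y=\max\{x-y,0\}$, regarded as bounded with $1=n-1$. *)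

theory Defs
  imports Main "HOL.Real"
begin

definition bck_algebra :: "'a set \<Rightarrow> ('a \<Rightarrow> 'a \<Rightarrow> 'a) \<Rightarrow> 'a \<Rightarrow> bool" where
  "bck_algebra A m z \<longleftrightarrow>
     z \<in> A \<and> (\<forall>x\<in>A. \<forall>y\<in>A. m x y \<in> A) \<and>
     (\<forall>x\<in>A. \<forall>y\<in>A. \<forall>w\<in>A. m (m (m x y) (m x w)) (m w y) = z) \<and>
     (\<forall>x\<in>A. \<forall>y\<in>A. m (m x (m x y)) y = z) \<and>
     (\<forall>x\<in>A. m x x = z) \<and>
     (\<forall>x\<in>A. m z x = z) \<and>
     (\<forall>x\<in>A. \<forall>y\<in>A. m x y = z \<and> m y x = z \<longrightarrow> x = y)"

definition bck_meet :: "('a \<Rightarrow> 'a \<Rightarrow> 'a) \<Rightarrow> 'a \<Rightarrow> 'a \<Rightarrow> 'a" where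
  "bck_meet m x y = m y (m y x)"

definition commutative_bck :: "'a set \<Rightarrow> ('a \<Rightarrow> 'a \<Rightarrow> 'a) \<Rightarrow> 'a \<Rightarrow> bool" where
  "commutative_bck A m z \<longleftrightarrow> bck_algebra A m z \<and>
     (\<forall>x\<in>A. \<forall>y\<in>A. bck_meet m x y = bck_meet m y x)"

definition bounded_bck :: "'a set \<Rightarrow> ('a \<Rightarrow> 'a \<Rightarrow> 'a) \<Rightarrow> 'a \<Rightarrow> 'a \<Rightarrow> bool" where
  "bounded_bck A m z u \<longleftrightarrow> bck_algebra A m z \<and> u \<in> A \<and> (\<forall>x\<in>A. m x u = z)"

definition bck_neg :: "('a \<Rightarrow> 'a \<Rightarrow> 'a) \<Rightarrow> 'a \<Rightarrow> 'a \<Rightarrow> 'a" where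
  "bck_neg m u x = m u x"

definition bck_join :: "('a \<Rightarrow> 'a \<Rightarrow> 'a) \<Rightarrow> 'a \<Rightarrow> 'a \<Rightarrow> 'a \<Rightarrow> 'a" where
  "bck_join m u x y = bck_neg m u (bck_meet m (bck_neg m u x) (bck_neg m u y))"

definition emd :: "'a set \<Rightarrow> ('a \<Rightarrow> 'a \<Rightarrow> 'a) \<Rightarrow> 'a \<Rightarrow> real" where
  "emd A m u = real (card {x\<in>A. bck_join m u x (bck_neg m u x) = u}) / real (card A)"

definition Cn_carrier :: "nat \<Rightarrow> nat set" where
  "Cn_carrier n = {0..<n}"

definition Cn_op :: "nat \<Rightarrow> nat \<Rightarrow> nat" where
  "Cn_op x y = max (x - y) 0"

end

theory Submission
  imports Defs
begin

locale cb =
  fixes A :: "'a set" and m :: "'a \<Rightarrow> 'a \<Rightarrow> 'a" and z u :: 'a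
  assumes zA: "z \<in> A" and uA: "u \<in> A" and cl: "\<And>x y. x\<in>A \<Longrightarrow> y\<in>A \<Longrightarrow> m x y \<in> A"
  and b1: "\<And>x y w. x\<in>A \<Longrightarrow> y\<in>A \<Longrightarrow> w\<in>A \<Longrightarrow> m (m (m x y) (m x w)) (m w y) = z"
  and b2: "\<And>x y. x\<in>A \<Longrightarrow> y\<in>A \<Longrightarrow> m (m x (m x y)) y = z"
  and b3: "\<And>x. x\<in>A \<Longrightarrow> m x x = z"
  and b4: "\<And>x. x\<in>A \<Longrightarrow> m z x = z"
  and b5: "\<And>x y. x\<in>A \<Longrightarrow> y\<in>A \<Longrightarrow> m x y = z \<Longrightarrow> m y x = z \<Longrightarrow> x = y"
  and cm: "\<And>x y. x\<in>A \<Longrightarrow> y\<in>A \<Longrightarrow> m y (m y x) = m x (m x y)"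
  and bd: "\<And>x. x\<in>A \<Longrightarrow> m x u = z"
begin
lemma l1: "x\<in>A \<Longrightarrow> m x z = x"
  by (metis cl b2 b3 b5)
lemma l3: "x\<in>A \<Longrightarrow> y \<in> A \<Longrightarrow> m (m x y) x = z"
  by (metis (full_types) b1 b2 b3 b4 b5 cl cm)
lemma tr: "x\<in>A \<Longrightarrow> y \<in> A \<Longrightarrow> w\<in>A \<Longrightarrow> m x y = z \<Longrightarrow> m y w = z \<Longrightarrow> m x w = z"
  by (metis cl b1 b4 b5)
lemma nn: "x\<in>A \<Longrightarrow> m u (m u x) = x"
  by (metis bd cm l1 uA)
lemma ma: "x\<in>A \<Longrightarrow> y \<in> A \<Longrightarrow> w\<in>A \<Longrightarrow> m x y = z \<Longrightarrow> m (m w y) (m w x) = z"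
  by (metis b1 cl l1)
lemma mb: "x\<in>A \<Longrightarrow> y \<in> A \<Longrightarrow> w\<in>A \<Longrightarrow> m x y = z \<Longrightarrow> m (m x w) (m y w) = z"
  by (metis b1 cl l1)
lemma ex1: "x\<in>A \<Longrightarrow> y \<in> A \<Longrightarrow> w\<in>A \<Longrightarrow> m (m (m x y) w) (m (m x w) y) = z"
proof -
  assume h: "x\<in>A" "y \<in> A" "w\<in>A"
  have 1: "m (m (m x y) w) (m (m x y) (m x (m x w))) = z" using ma[of "m x (m x w)" w "m x y"] b2 h cl by auto
  have 2: "m (m (m x y) (m x (m x w))) (m (m x w) y) = z" using b1[of x y "m x w"] h cl by auto
  show ?thesis using tr[OF _ _ _ 1 2] h cl by auto
qed
lemma ex: "x\<in>A \<Longrightarrow> y \<in> A \<Longrightarrow> w\<in>A \<Longrightarrow> m (m x y) w = m (m x w) y"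
  by (meson b5 cl ex1)
lemma cp: "x\<in>A \<Longrightarrow> y \<in> A \<Longrightarrow> m (m u y) (m u x) = m x y"
  by (metis ex nn uA cl)
lemma xxy: "x\<in>A \<Longrightarrow> y \<in> A \<Longrightarrow> m x (m x (m x y)) = m x y"
  by (metis cl cm l1 l3)
lemma asc: "x\<in>A \<Longrightarrow> y \<in> A \<Longrightarrow> w\<in>A \<Longrightarrow> m (m x y) w = m x (m u (m (m u y) w))"
proof -
  assume h: "x\<in>A" "y \<in> A" "w\<in>A"
  have nA: "m u y \<in> A" "m u x \<in> A" "m (m u y) w \<in> A" using h cl uA by auto
  have "m x (m u (m (m u y) w)) = m (m (m u y) w) (m u x)"
    using cp[OF h(1) cl[OF uA nA(3)]] nn[OF nA(3)] by simp
  also have "\<dots> = m (m (m u y) (m u x)) w" using ex[OF nA(1) h(3) nA(2)] by simp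
  also have "\<dots> = m (m x y) w" using cp[OF h(1,2)] by simp
  finally show ?thesis by simp
qed
definition t where "t x y = m x (m u y)"
lemma tcl: "x\<in>A \<Longrightarrow> y \<in> A \<Longrightarrow> t x y \<in> A" by (simp add: t_def cl uA)
lemma tc: "x\<in>A \<Longrightarrow> y \<in> A \<Longrightarrow> t x y = t y x" unfolding t_def by (metis cp nn cl uA)
lemma ta: "x\<in>A \<Longrightarrow> y \<in> A \<Longrightarrow> w\<in>A \<Longrightarrow> t (t x y) w = t x (t y w)" unfolding t_def by (metis asc nn cl uA)
lemma negB: "x\<in>A \<Longrightarrow> t x x = x \<Longrightarrow> t (m u x) (m u x) = m u x"
proof -
  assume h: "x\<in>A" "t x x = x"
  have nA: "m u x \<in> A" using h cl uA by auto
  have 1: "m x (m u x) = x" using h(2) unfolding t_def .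
  have "m (m u x) (m (m u x) x) = z" using cm[OF nA h(1)] 1 b3 h(1) by simp
  moreover have "m (m (m u x) x) (m u x) = z" using l3 nA h by simp
  ultimately have "m u x = m (m u x) x" using b5 nA h cl by blast
  then show ?thesis unfolding t_def using nn h by simp
qed
lemma L1: "b\<in>A \<Longrightarrow> x\<in>A \<Longrightarrow> t b b = b \<Longrightarrow> t b x = m b (m b x)"
proof -
  assume h: "b\<in>A" "x\<in>A" "t b b = b"
  have nbA: "m u b \<in> A" and nxA: "m u x \<in> A" using h cl uA by auto
  have nbb: "m (m u b) b = m u b" using negB[OF h(1) h(3)] nn[OF h(1)] unfolding t_def by simp
  have e1: "m b (m u x) = m x (m u b)" using cp[OF h(1) nxA] nn[OF h(2)] by simp
  have a0: "m (m x (m u b)) b = z"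
    using asc[OF h(2) nbA h(1)] nn[OF h(1)] b3[OF h(1)] l1[OF uA] bd[OF h(2)] by simp
  have a1: "m (m x b) (m u b) = z" using ex[OF h(2) h(1) nbA] a0 ex[OF h(2) nbA h(1)] by simp
  have i: "m (m x (m u b)) (m x (m x b)) = z" using ma[OF cl[OF h(2,1)] nbA h(2) a1] .
  define q where "q = m x (m x b)"
  have qA: "q \<in> A" using q_def h cl by auto
  have qb: "m q b = z" unfolding q_def using cm[OF h(1,2)] l3[OF h(1) cl[OF h(1,2)]] by simp
  have qx: "m q x = z" unfolding q_def using l3[OF h(2) cl[OF h(2,1)]] .
  have 1: "m (m u b) (m (m u b) q) = z" using ma[OF qA h(1) nbA qb] nbb by simp
  have 2: "m (m (m u b) q) (m u b) = z" using l3[OF nbA qA] .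
  have 3: "m (m u b) q = m u b" using b5[OF nbA cl[OF nbA qA] 1 2] by simp
  have 4: "m q (m q (m u b)) = z" using cm[OF qA nbA] 3 b3[OF nbA] by simp
  have 5: "m (m q (m u b)) q = z" using l3[OF qA nbA] .
  have 6: "q = m q (m u b)" using b5[OF qA cl[OF qA nbA] 4 5] .
  have 7: "m q (m x (m u b)) = z" using mb[OF qA h(2) nbA qx] 6 by simp
  have 8: "m x (m u b) = q" using b5[OF cl[OF h(2) nbA] qA i[folded q_def] 7] .
  show ?thesis unfolding t_def e1 8 q_def using cm[OF h(1,2)] by simp
qed
lemma star: "b\<in>A \<Longrightarrow> x\<in>A \<Longrightarrow> t b b = b \<Longrightarrow> m x (m u b) = m x (m x b)"
  by (metis L1 cm t_def tc)
lemma L: "b\<in>A \<Longrightarrow> x\<in>A \<Longrightarrow> t b b = b \<Longrightarrow> m u x = m (m u (m x (m u b))) (m x b)"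
proof -
  assume h: "b\<in>A" "x\<in>A" "t b b = b"
  define q where "q = m x b"
  have qA: "q \<in> A" using h cl q_def by auto
  have "m (m u (m x (m u b))) (m x b) = m (m u q) (m x q)"
    using star[OF h] cp[of "m u q" "m x q"] nn[of q] h cl uA q_def by auto
  also have "\<dots> = m (m u q) (m (m u q) (m u x))" using cp[of x q] h qA by simp
  also have "\<dots> = m (m u x) (m (m u x) (m u q))" using cm h qA cl uA by auto
  also have "\<dots> = m u x" using cp[of q x] l3[of x b] q_def h l1 cl uA by auto
  finally show ?thesis by simp
qed

definition Bs where "Bs = {x\<in>A. t x x = x}"

lemma L2: "b\<in>A \<Longrightarrow> x\<in>A \<Longrightarrow> t b b = b \<Longrightarrow> m u x = m (m u (t x b)) (t x (m u b))"
proof -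
  assume h: "b\<in>A" "x\<in>A" "t b b = b"
  have e: "t x (m u b) = m x b" unfolding t_def using nn h(1) by simp
  show ?thesis unfolding e using L[OF h] unfolding t_def .
qed

lemma rr: "s\<in>A \<Longrightarrow> c\<in>A \<Longrightarrow> t c c = c \<Longrightarrow> t (t s s) c = t (t s c) (t s c)"
proof -
  assume h: "s\<in>A" "c\<in>A" "t c c = c"
  have "t (t s c) (t s c) = t s (t c (t s c))" using ta h tcl by simp
  also have "\<dots> = t s (t c (t c s))" using tc h by simp
  also have "\<dots> = t s (t (t c c) s)" using ta[of c c s] h(1,2) by simp
  also have "\<dots> = t s (t s c)" using h tc by simp
  also have "\<dots> = t (t s s) c" using ta h by simp
  finally show ?thesis by simp
qed

lemma tB: "b\<in>A \<Longrightarrow> c\<in>A \<Longrightarrow> t b b = b \<Longrightarrow> t c c = c \<Longrightarrow> t (t b c) (t b c) = t b c"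
proof -
  assume h: "b\<in>A" "c\<in>A" "t b b = b" "t c c = c"
  show ?thesis using rr[of b c] h by simp
qed

lemma mB: "b\<in>A \<Longrightarrow> c\<in>A \<Longrightarrow> t b b = b \<Longrightarrow> t c c = c \<Longrightarrow> t (m b c) (m b c) = m b c"
proof -
  assume h: "b\<in>A" "c\<in>A" "t b b = b" "t c c = c"
  have e: "m b c = t b (m u c)" using h nn unfolding t_def by simp
  show ?thesis unfolding e using tB[of b "m u c"] negB[of c] h cl uA by auto
qed

lemma inj: "b\<in>A \<Longrightarrow> c\<in>A \<Longrightarrow> d\<in>A \<Longrightarrow> t b b = b \<Longrightarrow> t c c = c \<Longrightarrow> t d d = z
   \<Longrightarrow> m b d = m c d \<Longrightarrow> m b c = z"
proof -
  assume h: "b\<in>A" "c\<in>A" "d\<in>A" "t b b = b" "t c c = c" "t d d = z" "m b d = m c d"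
  define e where "e = m b c"
  have eA: "e \<in> A" using h cl e_def by auto
  have eB: "t e e = e" using mB h e_def by auto
  have 1: "m e d = z" unfolding e_def using ex[of b c d] ex[of c c d] h b3 b4 by simp
  have 2: "m (m u d) (m u e) = z" using ma[OF eA h(3) uA 1] .
  have 3: "m d (m u d) = z" using h(6) unfolding t_def .
  have nd: "m u d \<in> A" "m u e \<in> A" using cl uA h eA by auto
  have 4: "m e (m u d) = z" using tr[OF eA h(3) nd(1) 1 3] .
  have "m e (m u e) = z" using tr[OF eA nd 4 2] .
  then show ?thesis using eB unfolding t_def e_def by simp
qed

lemma injB: "b\<in>A \<Longrightarrow> c\<in>A \<Longrightarrow> d\<in>A \<Longrightarrow> t b b = b \<Longrightarrow> t c c = c \<Longrightarrow> t d d = z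
   \<Longrightarrow> m b d = m c d \<Longrightarrow> b = c"
proof -
  assume h: "b\<in>A" "c\<in>A" "d\<in>A" "t b b = b" "t c c = c" "t d d = z" "m b d = m c d"
  have 1: "m b c = z" using inj[OF h] .
  have 2: "m c b = z" using inj[OF h(2,1,3,5,4,6) h(7)[symmetric]] .
  show ?thesis using b5[OF h(1,2) 1 2] .
qed

lemma I3: "b\<in>A \<Longrightarrow> d\<in>A \<Longrightarrow> t b b = b \<Longrightarrow> t (m b d) (m b d) = m b d
   \<Longrightarrow> t (m (m u b) d) (m (m u b) d) = m (m u b) d \<Longrightarrow> t d d = d"
proof -
  assume h: "b\<in>A" "d\<in>A" "t b b = b" "t (m b d) (m b d) = m b d"
     "t (m (m u b) d) (m (m u b) d) = m (m u b) d"
  define s where "s = m u d"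
  have sA: "s \<in> A" using s_def cl uA h by auto
  have nbA: "m u b \<in> A" using cl uA h by auto
  have e1: "t s b = m b d" unfolding t_def s_def using cp h by simp
  have e2: "t s (m u b) = m (m u b) d" unfolding t_def s_def using cp[of "m u b" d] nn h nbA by simp
  have ssA: "t s s \<in> A" using tcl sA by auto
  have r1: "t (t s s) b = t s b"
  proof -
    have "t (t s s) b = t (t s b) (t s b)" using rr sA h by simp
    then show ?thesis using e1 h by simp
  qed
  have r2: "t (t s s) (m u b) = t s (m u b)"
  proof -
    have "t (t s s) (m u b) = t (t s (m u b)) (t s (m u b))" using rr sA nbA negB h by simp
    then show ?thesis using e2 h by simp
  qed
  have nb: "m u (m u b) = b" using nn h by simp
  have x1: "m u (t s s) = m (m u (t (t s s) b)) (t (t s s) (m u b))"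
    using L2[OF h(1) ssA h(3)] .
  have x2: "m u s = m (m u (t s b)) (t s (m u b))"
    using L2[OF h(1) sA h(3)] .
  have "m u (t s s) = m u s" using x1 x2 r1 r2 by simp
  then have "m u (m u (t s s)) = m u (m u s)" by simp
  then have "t s s = s" using nn[OF ssA] nn[OF sA] by simp
  then show ?thesis using negB[of s] nn[of d] h(2) sA unfolding s_def by simp
qed

lemma memB: "x\<in>A \<Longrightarrow> (m u (m x (m x (m u x))) = u) = (t x x = x)"
proof
  assume h: "x\<in>A" "m u (m x (m x (m u x))) = u"
  have a: "m x (m x (m u x)) \<in> A" using h cl uA by auto
  have "m u (m u (m x (m x (m u x)))) = m u u" using h(2) by simp
  then have e: "m x (m x (m u x)) = z" using nn[OF a] b3[OF uA] by simp
  have nA: "m u x \<in> A" "m x (m u x) \<in> A" using h cl uA by auto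
  have "m (m x (m u x)) x = z" using l3[OF h(1) nA(1)] .
  then have "x = m x (m u x)" using b5[OF h(1) nA(2) e] by simp
  then show "t x x = x" unfolding t_def by simp
next
  assume h: "x\<in>A" "t x x = x"
  then show "m u (m x (m x (m u x))) = u" unfolding t_def using b3 l1 uA by simp
qed

lemma dex: "a\<in>A \<Longrightarrow> t a a \<noteq> a \<Longrightarrow> \<exists>d\<in>A. t d d = z \<and> t d d \<noteq> d"
proof -
  assume h: "a\<in>A" "t a a \<noteq> a"
  define d where "d = m a (m a (m u a))"
  have naA: "m u a \<in> A" using h cl uA by auto
  have dA: "d \<in> A" using d_def h cl uA by auto
  have d1: "m d a = z" using l3 d_def h naA cl by auto
  have d2: "m d (m u a) = z" using l3[of "m u a" "m (m u a) a"] cm[of "m u a" a] d_def h naA cl by auto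
  have d3: "m (m u a) (m u d) = z" using ma[OF dA h(1) uA d1] .
  have dd: "t d d = z" unfolding t_def using tr[OF dA naA _ d2 d3] dA cl uA by auto
  have "t d d \<noteq> d"
  proof
    assume "t d d = d"
    then have "d = z" using dd by simp
    then have "m u (m a (m a (m u a))) = u" unfolding d_def using l1[OF uA] by simp
    then have "t a a = a" using memB h(1) by simp
    then show False using h by simp
  qed
  then show ?thesis using dA dd by auto
qed

end

lemma cbI: assumes co: "commutative_bck A m z" and bo: "bounded_bck A m z u" shows "cb A m z u"
proof -
  have ba: "bck_algebra A m z" using co unfolding commutative_bck_def by (rule conjunct1)
  have cm: "\<forall>x\<in>A. \<forall>y\<in>A. m y (m y x) = m x (m x y)" using co unfolding commutative_bck_def bck_meet_def by (rule conjunct2)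
  have bd: "u \<in> A" "\<forall>x\<in>A. m x u = z" using bo unfolding bounded_bck_def by simp_all
  note f = ba[unfolded bck_algebra_def]
  show ?thesis
  proof
    show "z \<in> A" using f by (elim conjE)
    show "u \<in> A" using bd by simp
    show "\<And>x y. x \<in> A \<Longrightarrow> y \<in> A \<Longrightarrow> m x y \<in> A" using f by (elim conjE) blast
    show "\<And>x y w. x \<in> A \<Longrightarrow> y \<in> A \<Longrightarrow> w \<in> A \<Longrightarrow> m (m (m x y) (m x w)) (m w y) = z" using f by (elim conjE) blast
    show "\<And>x y. x \<in> A \<Longrightarrow> y \<in> A \<Longrightarrow> m (m x (m x y)) y = z" using f by (elim conjE) blast
    show "\<And>x. x \<in> A \<Longrightarrow> m x x = z" using f by (elim conjE) blast
    show "\<And>x. x \<in> A \<Longrightarrow> m z x = z" using f by (elim conjE) blast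
    show "\<And>x y. x \<in> A \<Longrightarrow> y \<in> A \<Longrightarrow> m x y = z \<Longrightarrow> m y x = z \<Longrightarrow> x = y" using f by (elim conjE) blast
    show "\<And>x y. x \<in> A \<Longrightarrow> y \<in> A \<Longrightarrow> m y (m y x) = m x (m x y)" using cm by blast
    show "\<And>x. x \<in> A \<Longrightarrow> m x u = z" using bd by blast
  qed
qed

lemma chain_set: "n \<ge> 2 \<Longrightarrow> {x\<in>Cn_carrier n. bck_join Cn_op (n-1) x (bck_neg Cn_op (n-1) x) = n - 1} = {0, n-1}"
  unfolding Cn_carrier_def bck_join_def bck_neg_def bck_meet_def Cn_op_def
  by (auto simp: max_def split: if_splits)

lemma chain_emd: "n \<ge> 2 \<Longrightarrow> emd (Cn_carrier n) Cn_op (n - 1) = 2 / real n"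
  unfolding emd_def using chain_set[of n] by (simp add: Cn_carrier_def)

theorem theorem4p2:
  shows "(\<forall>(A :: 'a set) m z u.
            finite A \<longrightarrow> commutative_bck A m z \<longrightarrow> bounded_bck A m z u \<longrightarrow>
            (\<forall>x\<in>A. bck_join m u x (bck_neg m u x) = u) \<or> emd A m u \<le> 2 / 3)
       \<and> emd (Cn_carrier 3) Cn_op (3 - 1) = 2 / 3
       \<and> (\<forall>n::nat. n \<ge> 2 \<longrightarrow> emd (Cn_carrier n) Cn_op (n - 1) = 2 / real n)"
proof (intro conjI allI impI)
  fix A :: "'a set" and m z u
  assume fin: "finite A" and co: "commutative_bck A m z" and bo: "bounded_bck A m z u"
  interpret cb A m z u using cbI[OF co bo] .
  have eqset: "{x\<in>A. bck_join m u x (bck_neg m u x) = u} = Bs"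
  proof -
    have j: "bck_join m u x (bck_neg m u x) = m u (m x (m x (m u x)))" if "x \<in> A" for x
      unfolding bck_join_def bck_neg_def bck_meet_def using nn[OF that] by simp
    show ?thesis unfolding Bs_def using j memB by (auto simp del: bck_join_def)
  qed
  show "(\<forall>x\<in>A. bck_join m u x (bck_neg m u x) = u) \<or> emd A m u \<le> 2 / 3"
  proof (cases "\<forall>x\<in>A. t x x = x")
    case True
    then show ?thesis using eqset unfolding Bs_def by blast
  next
    case False
    then obtain a where a: "a \<in> A" "t a a \<noteq> a" by blast
    obtain d where d: "d \<in> A" "t d d = z" "t d d \<noteq> d" using dex[OF a] by blast
    define F where "F b = (if m b d \<notin> Bs then m b d else m (m u b) d)" for b
    define G where "G b = (F b, m b d \<notin> Bs)" for b
    have BsA: "Bs \<subseteq> A" unfolding Bs_def by auto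
    have Fin: "F b \<in> A - Bs" if b: "b \<in> Bs" for b
    proof -
      have bA: "b \<in> A" and bb: "t b b = b" using b unfolding Bs_def by auto
      have "\<not> (m b d \<in> Bs \<and> m (m u b) d \<in> Bs)"
        using I3[OF bA d(1) bb] d(3) unfolding Bs_def by auto
      then show ?thesis unfolding F_def using bA d(1) cl uA unfolding Bs_def by auto
    qed
    have injG: "inj_on G Bs"
    proof (rule inj_onI)
      fix b c assume b: "b \<in> Bs" and c: "c \<in> Bs" and e: "G b = G c"
      have bA: "b \<in> A" and bb: "t b b = b" using b unfolding Bs_def by auto
      have cA: "c \<in> A" and cc: "t c c = c" using c unfolding Bs_def by auto
      have nbA: "m u b \<in> A" and ncA: "m u c \<in> A" using bA cA cl uA by auto
      have nbb: "t (m u b) (m u b) = m u b" using negB bA bb by simp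
      have ncc: "t (m u c) (m u c) = m u c" using negB cA cc by simp
      from e have f: "F b = F c" and g: "(m b d \<notin> Bs) = (m c d \<notin> Bs)" unfolding G_def by auto
      show "b = c"
      proof (cases "m b d \<notin> Bs")
        case True
        then have "m b d = m c d" using f g unfolding F_def by simp
        then show ?thesis using injB[OF bA cA d(1) bb cc d(2)] by simp
      next
        case False
        then have "m (m u b) d = m (m u c) d" using f g unfolding F_def by simp
        then have "m u b = m u c" using injB[OF nbA ncA d(1) nbb ncc d(2)] by simp
        then have "m u (m u b) = m u (m u c)" by simp
        then show ?thesis using nn bA cA by simp
      qed
    qed
    have Gin: "G ` Bs \<subseteq> (A - Bs) \<times> (UNIV :: bool set)" using Fin unfolding G_def by auto
    have finB: "finite Bs" using fin BsA finite_subset by blast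
    have "card Bs = card (G ` Bs)" using card_image[OF injG] by simp
    also have "\<dots> \<le> card ((A - Bs) \<times> (UNIV :: bool set))"
      using Gin by (intro card_mono) (use fin in auto)
    also have "\<dots> = 2 * card (A - Bs)" by (simp add: card_cartesian_product)
    finally have c1: "card Bs \<le> 2 * card (A - Bs)" .
    have c2: "card A = card Bs + card (A - Bs)"
      using card_Diff_subset[OF finB BsA] card_mono[OF fin BsA] by simp
    have pos: "card A > 0" using a fin card_gt_0_iff by blast
    have "real (card Bs) * 3 \<le> 2 * real (card A)" using c1 c2 by linarith
    then show ?thesis unfolding emd_def eqset using pos by (simp add: field_simps)
  qed
next
  show "emd (Cn_carrier 3) Cn_op (3 - 1) = 2 / 3" using chain_emd[of 3] by simp
next
  fix n :: nat assume "n \<ge> 2"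
  then show "emd (Cn_carrier n) Cn_op (n - 1) = 2 / real n" using chain_emd by simp
qed

end
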